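(* Let $\mathbb X_S\subset\mathbb X$ be a quasi-Banach space and $\mathbb X_L$ a Banach space with continuous embeddings $\mathbb X_S\subset\mathbb X_L\subset\mathbb X_A$, and let $e\in(0,1)$. For $\varrho>0$ let $K^\varrho_{\mathbb X_S}:=\{x\in\mathbb X_S:\|x\|_{\mathbb X_S}\le\varrho\}$. The following are equivalent: (i) there is a continuous embedding $(\mathbb X_A,\mathbb X_S)_{e,1}\subset\mathbb X_L$; (ii) there is $c>0$ with $\Omega(\delta,K^\varrho_{\mathbb X_S})\le c\varrho^e\delta^{1-e}$ for all $\delta,\varrho>0$.
   Context: $\mathbb X$, $\mathbb X_A$ real Banach spaces with a continuous dense embedding $\mathbb X\subset\mathbb X_A$; $\mathbb Y$ real Hilbert space; $A:\mathbb X_A\to\mathbb Y$ bounded linear with $\frac1M\|x\|_{\mathbb X_A}\le\|Ax\|_{\mathbb Y}\le M\|x\|_{\mathbb X_A}$ for all $x\in\mathbb X_A$ ($M\ge1$). Loss: $L(x_1,x_2):=\|x_1-x_2\|_{\mathbb X_L}$ if $x_1-x_2\in\mathbb X_L$ and $\infty$ otherwise. Modulus of continuity: $\Omega(\delta,K):=\sup\{L(x_1,x_2):x_1,x_2\in K,\ \|Ax_1-Ax_2\|_{\mathbb Y}\le\delta\}$. Real interpolation: $K(x,t):=\inf_{z\in\mathbb X_S}(\|x-z\|_{\mathbb X_A}+t\|z\|_{\mathbb X_S})$, and $(\mathbb X_A,\mathbb X_S)_{e,1}:=\{x\in\mathbb X_A:\int_0^\infty t^{-e}K(x,t)\frac{dt}t<\infty\}$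 with that integral as quasi-norm. *)

theory Defs
  imports "HOL-Analysis.Analysis"
begin

text \<open>Subspaces of the ambient Banach space X_A (modelled as a type 'a :: banach)
  carrying their own (quasi-)norms.\<close>

definition quasi_normed_subspace :: "'a::real_vector set \<Rightarrow> ('a \<Rightarrow> real) \<Rightarrow> bool" where
  "quasi_normed_subspace S q \<longleftrightarrow>
     subspace S \<and>
     (\<forall>x\<in>S. 0 \<le> q x) \<and>
     (\<forall>x\<in>S. q x = 0 \<longleftrightarrow> x = 0) \<and>
     (\<forall>c. \<forall>x\<in>S. q (c *\<^sub>R x) = \<bar>c\<bar> * q x) \<and>
     (\<exists>C\<ge>1. \<forall>x\<in>S. \<forall>y\<in>S. q (x + y) \<le> C * (q x + q y))"

definition normed_subspace :: "'a::real_vector set \<Rightarrow> ('a \<Rightarrow> real) \<Rightarrow> bool" where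
  "normed_subspace S n \<longleftrightarrow>
     subspace S \<and>
     (\<forall>x\<in>S. 0 \<le> n x) \<and>
     (\<forall>x\<in>S. n x = 0 \<longleftrightarrow> x = 0) \<and>
     (\<forall>c. \<forall>x\<in>S. n (c *\<^sub>R x) = \<bar>c\<bar> * n x) \<and>
     (\<forall>x\<in>S. \<forall>y\<in>S. n (x + y) \<le> n x + n y)"

definition complete_wrt :: "'a::real_vector set \<Rightarrow> ('a \<Rightarrow> real) \<Rightarrow> bool" where
  "complete_wrt S q \<longleftrightarrow>
     (\<forall>f::nat \<Rightarrow> 'a. (\<forall>k. f k \<in> S) \<and>
        (\<forall>\<epsilon>>0. \<exists>N. \<forall>m\<ge>N. \<forall>k\<ge>N. q (f m - f k) < \<epsilon>)
        \<longrightarrow> (\<exists>x\<in>S. (\<lambda>k. q (f k - x)) \<longlonglongrightarrow> 0))"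

definition quasi_banach_subspace :: "'a::real_vector set \<Rightarrow> ('a \<Rightarrow> real) \<Rightarrow> bool" where
  "quasi_banach_subspace S q \<longleftrightarrow> quasi_normed_subspace S q \<and> complete_wrt S q"

definition banach_subspace :: "'a::real_vector set \<Rightarrow> ('a \<Rightarrow> real) \<Rightarrow> bool" where
  "banach_subspace S n \<longleftrightarrow> normed_subspace S n \<and> complete_wrt S n"

definition cont_embedding :: "'a set \<Rightarrow> ('a \<Rightarrow> real) \<Rightarrow> 'a set \<Rightarrow> ('a \<Rightarrow> real) \<Rightarrow> bool" where
  "cont_embedding S p T q \<longleftrightarrow> S \<subseteq> T \<and> (\<exists>C. \<forall>x\<in>S. q x \<le> C * p x)"

definition loss :: "'a::real_vector set \<Rightarrow> ('a \<Rightarrow> real) \<Rightarrow> 'a \<Rightarrow> 'a \<Rightarrow> ereal" where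
  "loss XL nL x1 x2 = (if x1 - x2 \<in> XL then ereal (nL (x1 - x2)) else \<infinity>)"

definition modulus :: "('a::real_vector \<Rightarrow> 'b::real_normed_vector) \<Rightarrow> 'a set \<Rightarrow> ('a \<Rightarrow> real)
     \<Rightarrow> real \<Rightarrow> 'a set \<Rightarrow> ereal" where
  "modulus A XL nL \<delta> K =
     Sup {loss XL nL x1 x2 | x1 x2. x1 \<in> K \<and> x2 \<in> K \<and> norm (A x1 - A x2) \<le> \<delta>}"

definition Kfun :: "'a::real_normed_vector set \<Rightarrow> ('a \<Rightarrow> real) \<Rightarrow> 'a \<Rightarrow> real \<Rightarrow> real" where
  "Kfun XS qS x t = (INF z\<in>XS. norm (x - z) + t * qS z)"

definition interp_integral :: "'a::real_normed_vector set \<Rightarrow> ('a \<Rightarrow> real) \<Rightarrow> real \<Rightarrow> 'a \<Rightarrow> ennreal" where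
  "interp_integral XS qS e x =
     (\<integral>\<^sup>+ t. indicator {0<..} t * ennreal (t powr (- e) * Kfun XS qS x t / t) \<partial>lborel)"

definition interp_space :: "'a::real_normed_vector set \<Rightarrow> ('a \<Rightarrow> real) \<Rightarrow> real \<Rightarrow> 'a set" where
  "interp_space XS qS e = {x. interp_integral XS qS e x < \<infinity>}"

definition interp_norm :: "'a::real_normed_vector set \<Rightarrow> ('a \<Rightarrow> real) \<Rightarrow> real \<Rightarrow> 'a \<Rightarrow> real" where
  "interp_norm XS qS e x = enn2real (interp_integral XS qS e x)"

definition Sball :: "'a set \<Rightarrow> ('a \<Rightarrow> real) \<Rightarrow> real \<Rightarrow> 'a set" where
  "Sball XS qS \<rho> = {x\<in>XS. qS x \<le> \<rho>}"

end

theory Submission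
  imports Defs
begin



lemma integral_bound:
  fixes k :: "real \<Rightarrow> real" and a b e :: real
  assumes ab: "a > 0" "b > 0" and e: "0 < e" "e < 1"
    and kb: "\<And>t. t > 0 \<Longrightarrow> 0 \<le> k t \<and> k t \<le> a \<and> k t \<le> t * b"
  shows "(\<integral>\<^sup>+ t. indicator {0<..} t * ennreal (t powr (- e) * k t / t) \<partial>lborel)
     \<le> ennreal ((1/(1-e) + 1/e) * a powr (1-e) * b powr e)"
proof -
  define s where "s = a / b"
  have s: "s > 0" using ab by (simp add: s_def)
  have I1: "((\<lambda>t. b * t powr (-e)) has_integral b * (s powr (-e+1) / (-e+1))) {0..s}"
    using has_integral_powr_from_0[of "-e" s] e s by (intro has_integral_mult_right) auto
  have I2: "((\<lambda>t. a * t powr (-e-1)) has_integral a * (-(s powr (-e-1+1)) / (-e-1+1))) {s..}"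
    using has_integral_powr_to_inf[of "-e-1" s] e s by (intro has_integral_mult_right) auto
  have N1: "(\<integral>\<^sup>+ t. ennreal (b * t powr (-e)) * indicator {0..s} t \<partial>lborel)
       = ennreal (b * (s powr (-e+1) / (-e+1)))"
    by (rule nn_integral_has_integral_lebesgue'[OF _ I1]) (use ab in auto)
  have N2: "(\<integral>\<^sup>+ t. ennreal (a * t powr (-e-1)) * indicator {s..} t \<partial>lborel)
       = ennreal (a * (-(s powr (-e-1+1)) / (-e-1+1)))"
    by (rule nn_integral_has_integral_lebesgue'[OF _ I2]) (use ab in auto)
  have pw: "indicator {0<..} t * ennreal (t powr (- e) * k t / t)
      \<le> ennreal (b * t powr (-e)) * indicator {0..s} t + ennreal (a * t powr (-e-1)) * indicator {s..} t"
    for t :: real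
  proof (cases "t > 0")
    case False thus ?thesis by simp
  next
    case True
    note kt = kb[OF True]
    show ?thesis
    proof (cases "t \<le> s")
      case True
      have "t powr (- e) * k t / t \<le> t powr (-e) * (t * b) / t"
        using kt \<open>t > 0\<close> by (intro divide_right_mono mult_left_mono) auto
      also have "\<dots> = b * t powr (-e)" using \<open>t > 0\<close> by simp
      finally show ?thesis using True \<open>t > 0\<close>
        by (simp add: ennreal_leI add_increasing2)
    next
      case False
      have "t powr (- e) * k t / t \<le> t powr (-e) * a / t"
        using kt \<open>t > 0\<close> by (intro divide_right_mono mult_left_mono) auto
      also have "\<dots> = a * t powr (-e-1)" using \<open>t > 0\<close>
        by (simp add: powr_diff)
      finally show ?thesis using False \<open>t > 0\<close>
        by (simp add: ennreal_leI add_increasing)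
    qed
  qed
  have "(\<integral>\<^sup>+ t. indicator {0<..} t * ennreal (t powr (- e) * k t / t) \<partial>lborel)
     \<le> (\<integral>\<^sup>+ t. ennreal (b * t powr (-e)) * indicator {0..s} t + ennreal (a * t powr (-e-1)) * indicator {s..} t \<partial>lborel)"
    by (intro nn_integral_mono pw)
  also have "\<dots> = (\<integral>\<^sup>+ t. ennreal (b * t powr (-e)) * indicator {0..s} t \<partial>lborel)
       + (\<integral>\<^sup>+ t. ennreal (a * t powr (-e-1)) * indicator {s..} t \<partial>lborel)"
    by (intro nn_integral_add) measurable
  also have "\<dots> = ennreal (b * (s powr (-e+1) / (-e+1)) + a * (-(s powr (-e-1+1)) / (-e-1+1)))"
    unfolding N1 N2 using ab s e by (intro ennreal_plus[symmetric]) (auto intro!: divide_nonneg_pos)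
  also have "b * (s powr (-e+1) / (-e+1)) + a * (-(s powr (-e-1+1)) / (-e-1+1))
      = (1/(1-e) + 1/e) * a powr (1-e) * b powr e"
  proof -
    have 1: "b * s powr (1-e) = a powr (1-e) * b powr e"
      using ab unfolding s_def by (simp add: powr_divide powr_diff field_simps)
    have 2: "a * s powr (-e) = a powr (1-e) * b powr e"
      using ab unfolding s_def by (simp add: powr_divide powr_diff powr_minus field_simps)
    show ?thesis using 1 2 e by (simp add: field_simps)
  qed
  finally show ?thesis .
qed




locale setting =
  fixes A :: "'a::banach \<Rightarrow> 'b::real_normed_vector"
    and XS XL :: "'a set"
    and qS nL :: "'a \<Rightarrow> real"
    and M e :: real
  assumes A_lin: "bounded_linear A"
    and M_ge: "M \<ge> 1"
    and A_bounds: "\<forall>x. norm x / M \<le> norm (A x) \<and> norm (A x) \<le> M * norm x"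
    and XS_qb: "quasi_banach_subspace XS qS"
    and XL_banach: "banach_subspace XL nL"
    and XS_XL: "cont_embedding XS qS XL nL"
    and XL_XA: "cont_embedding XL nL UNIV norm"
    and e: "0 < e" "e < 1"
begin

lemma XS_props: "subspace XS \<and>
     (\<forall>x\<in>XS. 0 \<le> qS x) \<and>
     (\<forall>x\<in>XS. qS x = 0 \<longleftrightarrow> x = 0) \<and>
     (\<forall>c. \<forall>x\<in>XS. qS (c *\<^sub>R x) = \<bar>c\<bar> * qS x) \<and>
     (\<exists>C\<ge>1. \<forall>x\<in>XS. \<forall>y\<in>XS. qS (x + y) \<le> C * (qS x + qS y))"
  using XS_qb unfolding quasi_banach_subspace_def quasi_normed_subspace_def by (rule conjunct1)
lemma XL_props: "subspace XL \<and>
     (\<forall>x\<in>XL. 0 \<le> nL x) \<and>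
     (\<forall>x\<in>XL. nL x = 0 \<longleftrightarrow> x = 0) \<and>
     (\<forall>c. \<forall>x\<in>XL. nL (c *\<^sub>R x) = \<bar>c\<bar> * nL x) \<and>
     (\<forall>x\<in>XL. \<forall>y\<in>XL. nL (x + y) \<le> nL x + nL y)"
  using XL_banach unfolding banach_subspace_def normed_subspace_def by (rule conjunct1)

lemma XS_subspace: "subspace XS" using XS_props by (rule conjunct1)
lemma XL_subspace: "subspace XL" using XL_props by (rule conjunct1)
lemma qS_nonneg: "x \<in> XS \<Longrightarrow> 0 \<le> qS x"
  using XS_props[THEN conjunct2, THEN conjunct1] by (rule bspec)
lemma qS_zero_iff: "x \<in> XS \<Longrightarrow> qS x = 0 \<longleftrightarrow> x = 0"
  using XS_props[THEN conjunct2, THEN conjunct2, THEN conjunct1] by (rule bspec)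
lemma qS_scale: "x \<in> XS \<Longrightarrow> qS (c *\<^sub>R x) = \<bar>c\<bar> * qS x"
  using XS_props[THEN conjunct2, THEN conjunct2, THEN conjunct2, THEN conjunct1] by blast
lemma qS_quasi: "\<exists>C\<ge>1. \<forall>x\<in>XS. \<forall>y\<in>XS. qS (x + y) \<le> C * (qS x + qS y)"
  using XS_props[THEN conjunct2, THEN conjunct2, THEN conjunct2, THEN conjunct2] .
lemma nL_nonneg: "x \<in> XL \<Longrightarrow> 0 \<le> nL x"
  using XL_props[THEN conjunct2, THEN conjunct1] by (rule bspec)
lemma nL_scale: "x \<in> XL \<Longrightarrow> nL (c *\<^sub>R x) = \<bar>c\<bar> * nL x"
  using XL_props[THEN conjunct2, THEN conjunct2, THEN conjunct2, THEN conjunct1] by blast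
lemma nL_tri: "x \<in> XL \<Longrightarrow> y \<in> XL \<Longrightarrow> nL (x + y) \<le> nL x + nL y"
  using XL_props[THEN conjunct2, THEN conjunct2, THEN conjunct2, THEN conjunct2] by blast
lemma XL_complete: "complete_wrt XL nL"
  using XL_banach unfolding banach_subspace_def by (rule conjunct2)

lemma qS_0: "qS 0 = 0" using qS_zero_iff XS_subspace subspace_0 by blast
lemma nL_0: "nL 0 = 0" using nL_scale[of 0 0] XL_subspace subspace_0 by fastforce
lemma qS_neg: "x \<in> XS \<Longrightarrow> qS (- x) = qS x" using qS_scale[of x "-1"] by simp
lemma nL_neg: "x \<in> XL \<Longrightarrow> nL (- x) = nL x" using nL_scale[of x "-1"] by simp
lemma nL_commute: "x \<in> XL \<Longrightarrow> y \<in> XL \<Longrightarrow> nL (x - y) = nL (y - x)"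
  using nL_neg[of "y - x"] XL_subspace by (simp add: subspace_diff)

lemma XS_XL_sub: "XS \<subseteq> XL" using XS_XL unfolding cont_embedding_def by blast
lemma Cs_ex: "\<exists>C\<ge>0. \<forall>x\<in>XS. nL x \<le> C * qS x"
proof -
  obtain C where C: "\<forall>x\<in>XS. nL x \<le> C * qS x" using XS_XL unfolding cont_embedding_def by blast
  have "nL x \<le> max C 0 * qS x" if "x \<in> XS" for x
    using C that qS_nonneg[OF that] by (metis max.cobounded1 mult_right_mono order_trans)
  thus ?thesis by (intro exI[of _ "max C 0"]) auto
qed
lemma CL_ex: "\<exists>C\<ge>0. \<forall>x\<in>XL. norm x \<le> C * nL x"
proof -
  obtain C where C: "\<forall>x\<in>XL. norm x \<le> C * nL x" using XL_XA unfolding cont_embedding_def by blast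
  have "norm x \<le> max C 0 * nL x" if "x \<in> XL" for x
    using C that nL_nonneg[OF that] by (metis max.cobounded1 mult_right_mono order_trans)
  thus ?thesis by (intro exI[of _ "max C 0"]) auto
qed

lemma M_pos: "M > 0" using M_ge by simp
lemma norm_le_A: "norm x \<le> M * norm (A x)"
  using A_bounds M_pos by (simp add: divide_le_eq mult.commute)
lemma A_diff: "A (x - y) = A x - A y"
  using A_lin by (simp add: linear_diff bounded_linear.linear)

lemma XS_ne: "XS \<noteq> {}" using XS_subspace subspace_0 by blast

lemma K_bdd: "t \<ge> 0 \<Longrightarrow> bdd_below ((\<lambda>z. norm (x - z) + t * qS z) ` XS)"
  by (rule bdd_belowI2[of _ 0]) (simp add: qS_nonneg)
lemma K_le: "z \<in> XS \<Longrightarrow> t \<ge> 0 \<Longrightarrow> Kfun XS qS x t \<le> norm (x - z) + t * qS z"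
  unfolding Kfun_def by (rule cINF_lower[OF K_bdd])
lemma K_nonneg: "t \<ge> 0 \<Longrightarrow> 0 \<le> Kfun XS qS x t"
  unfolding Kfun_def by (rule cINF_greatest[OF XS_ne]) (simp add: qS_nonneg)
lemma K_mono:
  assumes t: "0 \<le> t" "t \<le> t'"
  shows "Kfun XS qS x t \<le> Kfun XS qS x t'"
proof -
  have "Kfun XS qS x t \<le> norm (x - z) + t' * qS z" if z: "z \<in> XS" for z
  proof -
    have "Kfun XS qS x t \<le> norm (x - z) + t * qS z" by (rule K_le[OF z t(1)])
    also have "\<dots> \<le> norm (x - z) + t' * qS z"
      using qS_nonneg[OF z] t by (simp add: mult_right_mono)
    finally show ?thesis .
  qed
  hence "Kfun XS qS x t \<le> (INF z\<in>XS. norm (x - z) + t' * qS z)"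
    by (rule cINF_greatest[OF XS_ne])
  moreover have "Kfun XS qS x t' = (INF z\<in>XS. norm (x - z) + t' * qS z)" by (rule Kfun_def)
  ultimately show ?thesis by linarith
qed

lemma K_approx:
  assumes t: "t \<ge> 0" and ep: "\<epsilon> > 0"
  shows "\<exists>z\<in>XS. norm (x - z) + t * qS z < Kfun XS qS x t + \<epsilon>"
proof -
  have "(INF z\<in>XS. norm (x - z) + t * qS z) < (INF z\<in>XS. norm (x - z) + t * qS z) + \<epsilon>"
    using ep by linarith
  hence "\<exists>z\<in>XS. norm (x - z) + t * qS z < (INF z\<in>XS. norm (x - z) + t * qS z) + \<epsilon>"
    using cINF_less_iff[OF XS_ne K_bdd[OF t], of x "(INF z\<in>XS. norm (x - z) + t * qS z) + \<epsilon>"] by blast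
  thus ?thesis unfolding Kfun_def .
qed

lemma K_pos:
  assumes "x \<noteq> 0" "t > 0" shows "Kfun XS qS x t > 0"
proof (rule ccontr)
  assume "\<not> ?thesis"
  hence K0: "Kfun XS qS x t = 0" using K_nonneg[of t x] assms by simp
  obtain Cs where Cs: "Cs \<ge> 0" "\<forall>x\<in>XS. nL x \<le> Cs * qS x" using Cs_ex by blast
  obtain CL where CL: "CL \<ge> 0" "\<forall>x\<in>XL. norm x \<le> CL * nL x" using CL_ex by blast
  have "norm x \<le> \<epsilon> * (1 + CL * Cs / t)" if "\<epsilon> > 0" for \<epsilon>
  proof -
    obtain z where z: "z \<in> XS" "norm (x - z) + t * qS z < \<epsilon>"
      using K_approx[of t \<epsilon> x] K0 assms \<open>\<epsilon> > 0\<close> by auto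
    have "t * qS z \<le> \<epsilon>" using z(2) norm_ge_zero[of "x - z"] by linarith
    hence q: "qS z \<le> \<epsilon> / t" using assms by (simp add: le_divide_eq mult.commute)
    have "norm z \<le> CL * nL z" using CL z XS_XL_sub by auto
    also have "\<dots> \<le> CL * (Cs * qS z)" using Cs z CL by (intro mult_left_mono) auto
    also have "\<dots> \<le> CL * (Cs * (\<epsilon> / t))" using q Cs CL by (intro mult_left_mono) auto
    finally have nz: "norm z \<le> CL * Cs * \<epsilon> / t" by simp
    have "norm x \<le> norm (x - z) + norm z" using norm_triangle_ineq[of "x - z" z] by simp
    also have "\<dots> \<le> \<epsilon> + CL * Cs * \<epsilon> / t" using z nz qS_nonneg[OF z(1)] assms
      by (smt (verit) mult_nonneg_nonneg)
    finally show ?thesis by (simp add: field_simps)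
  qed
  note bnd = this
  define D where "D = 1 + CL * Cs / t"
  have D: "D > 0" using Cs CL assms unfolding D_def
    by (simp add: add_pos_nonneg)
  have nx: "norm x > 0" using assms by simp
  have "norm x \<le> (norm x / (2 * D)) * (1 + CL * Cs / t)"
    by (rule bnd) (use D nx in simp)
  hence "norm x \<le> norm x / 2" using D unfolding D_def[symmetric] by simp
  thus False using assms by simp
qed

end



context setting begin

lemma A0: "A 0 = 0" using A_lin by (simp add: linear_0 bounded_linear.linear)

lemma ii_to_L:
  assumes c: "c > 0"
    and H: "\<forall>\<delta>>0. \<forall>\<rho>>0. modulus A XL nL \<delta> (Sball XS qS \<rho>) \<le> ereal (c * \<rho> powr e * \<delta> powr (1 - e))"
    and u: "u \<in> XS"
  shows "nL u \<le> c * qS u powr e * norm (A u) powr (1-e)"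
proof (cases "u = 0")
  case True thus ?thesis using nL_0 c by simp
next
  case False
  have rho: "qS u > 0" using qS_nonneg[OF u] qS_zero_iff[OF u] False by linarith
  have "0 < norm u" using False by simp
  also have "norm u \<le> M * norm (A u)" by (rule norm_le_A)
  finally have del: "norm (A u) > 0" using M_pos by (simp add: zero_less_mult_iff)
  have uL: "u \<in> XL" using u XS_XL_sub by blast
  have "loss XL nL u 0 \<in> {loss XL nL x1 x2 | x1 x2. x1 \<in> Sball XS qS (qS u) \<and> x2 \<in> Sball XS qS (qS u)
          \<and> norm (A x1 - A x2) \<le> norm (A u)}"
    using u rho XS_subspace subspace_0 qS_0 A0 unfolding Sball_def by fastforce
  hence "loss XL nL u 0 \<le> modulus A XL nL (norm (A u)) (Sball XS qS (qS u))"
    unfolding modulus_def by (rule Sup_upper)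
  also have "\<dots> \<le> ereal (c * qS u powr e * norm (A u) powr (1 - e))"
    using H rho del by blast
  finally show ?thesis using uL unfolding loss_def by simp
qed

lemma L_to_ii:
  assumes c0: "c0 \<ge> 0"
    and L: "\<forall>u\<in>XS. nL u \<le> c0 * qS u powr e * norm (A u) powr (1-e)"
  shows "\<exists>c>0. \<forall>\<delta>>0. \<forall>\<rho>>0. modulus A XL nL \<delta> (Sball XS qS \<rho>) \<le> ereal (c * \<rho> powr e * \<delta> powr (1 - e))"
proof -
  obtain Cq where Cq: "Cq \<ge> 1" "\<forall>x\<in>XS. \<forall>y\<in>XS. qS (x + y) \<le> Cq * (qS x + qS y)"
    using qS_quasi by blast
  define c where "c = c0 * (2 * Cq) powr e + 1"
  have cpos: "c > 0" unfolding c_def using c0 by (simp add: add_nonneg_pos)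
  have "modulus A XL nL \<delta> (Sball XS qS \<rho>) \<le> ereal (c * \<rho> powr e * \<delta> powr (1 - e))"
    if d: "\<delta> > 0" and r: "\<rho> > 0" for \<delta> \<rho>
    unfolding modulus_def
  proof (rule Sup_least)
    fix y assume "y \<in> {loss XL nL x1 x2 | x1 x2. x1 \<in> Sball XS qS \<rho> \<and> x2 \<in> Sball XS qS \<rho>
          \<and> norm (A x1 - A x2) \<le> \<delta>}"
    then obtain x1 x2 where y: "y = loss XL nL x1 x2" and x1: "x1 \<in> XS" "qS x1 \<le> \<rho>"
      and x2: "x2 \<in> XS" "qS x2 \<le> \<rho>" and ad: "norm (A x1 - A x2) \<le> \<delta>"
      unfolding Sball_def by blast
    define u where "u = x1 - x2"
    have u: "u \<in> XS" unfolding u_def using x1 x2 XS_subspace by (simp add: subspace_diff)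
    have mx2: "- x2 \<in> XS" using x2 XS_subspace by (simp add: subspace_neg)
    have "qS u = qS (x1 + - x2)" unfolding u_def by simp
    also have "\<dots> \<le> Cq * (qS x1 + qS (- x2))" using Cq x1 mx2 by blast
    also have "\<dots> \<le> Cq * (2 * \<rho>)" using x1 x2 qS_neg[OF x2(1)] Cq by (intro mult_left_mono) auto
    finally have qu: "qS u \<le> 2 * Cq * \<rho>" by simp
    have au: "norm (A u) \<le> \<delta>" unfolding u_def A_diff using ad .
    have "nL u \<le> c0 * qS u powr e * norm (A u) powr (1-e)" using L u by blast
    also have "\<dots> \<le> c0 * (2 * Cq * \<rho>) powr e * \<delta> powr (1-e)"
      using c0 qu au e qS_nonneg[OF u]
      by (intro mult_mono mult_left_mono powr_mono2) auto
    also have "\<dots> = (c0 * (2 * Cq) powr e) * \<rho> powr e * \<delta> powr (1-e)"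
      using Cq r by (simp add: powr_mult)
    also have "\<dots> \<le> c * \<rho> powr e * \<delta> powr (1-e)"
      unfolding c_def by (intro mult_right_mono) auto
    finally have "nL u \<le> c * \<rho> powr e * \<delta> powr (1 - e)" .
    moreover have "u \<in> XL" using u XS_XL_sub by blast
    ultimately show "y \<le> ereal (c * \<rho> powr e * \<delta> powr (1 - e))"
      unfolding y loss_def u_def by simp
  qed
  thus ?thesis using cpos by blast
qed

lemma i_to_L:
  assumes emb: "cont_embedding (interp_space XS qS e) (interp_norm XS qS e) XL nL"
  shows "\<exists>c0\<ge>0. \<forall>u\<in>XS. nL u \<le> c0 * qS u powr e * norm (A u) powr (1-e)"
proof -
  obtain C where C: "\<forall>x\<in>interp_space XS qS e. nL x \<le> C * interp_norm XS qS e x"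
    using emb unfolding cont_embedding_def by blast
  define I0 where "I0 = 1/(1-e) + 1/e"
  have I0: "I0 \<ge> 0" unfolding I0_def using e by simp
  define c0 where "c0 = max C 0 * I0 * M powr (1-e)"
  have c0: "c0 \<ge> 0" unfolding c0_def using I0 by simp
  have "nL u \<le> c0 * qS u powr e * norm (A u) powr (1-e)" if u: "u \<in> XS" for u
  proof (cases "u = 0")
    case True thus ?thesis using nL_0 c0 by simp
  next
    case False
    have b: "qS u > 0" using qS_nonneg[OF u] qS_zero_iff[OF u] False by linarith
    have a: "norm u > 0" using False by simp
    have kb: "0 \<le> Kfun XS qS u t \<and> Kfun XS qS u t \<le> norm u \<and> Kfun XS qS u t \<le> t * qS u"
      if t: "t > 0" for t
    proof -
      have z0: "0 \<in> XS" using XS_subspace subspace_0 by blast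
      have 1: "0 \<le> Kfun XS qS u t" using K_nonneg[of t u] t by simp
      have 2: "Kfun XS qS u t \<le> norm u" using K_le[OF z0, of t u] t qS_0 by simp
      have 3: "Kfun XS qS u t \<le> t * qS u" using K_le[OF u, of t u] t by simp
      show ?thesis using 1 2 3 by blast
    qed
    define B where "B = I0 * norm u powr (1-e) * qS u powr e"
    have B: "B \<ge> 0" unfolding B_def using I0 by simp
    have int: "interp_integral XS qS e u \<le> ennreal B"
      unfolding interp_integral_def B_def I0_def
      by (rule integral_bound[OF a b e]) (use kb in blast)
    have "interp_integral XS qS e u < \<infinity>"
      using le_less_trans[OF int ennreal_less_top[of B]] by simp
    hence sp: "u \<in> interp_space XS qS e" unfolding interp_space_def by simp
    have nrm: "interp_norm XS qS e u \<le> B"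
      unfolding interp_norm_def using enn2real_mono[OF int ennreal_less_top[of B]] B by simp
    have "nL u \<le> C * interp_norm XS qS e u" using C sp by blast
    also have "\<dots> \<le> max C 0 * interp_norm XS qS e u"
      by (intro mult_right_mono) (auto simp: interp_norm_def)
    also have "\<dots> \<le> max C 0 * B" using nrm by (intro mult_left_mono) auto
    also have "\<dots> = max C 0 * I0 * norm u powr (1-e) * qS u powr e" unfolding B_def by simp
    also have "\<dots> \<le> max C 0 * I0 * (M * norm (A u)) powr (1-e) * qS u powr e"
      using norm_le_A[of u] e I0 by (intro mult_right_mono mult_left_mono powr_mono2) auto
    also have "\<dots> = c0 * qS u powr e * norm (A u) powr (1-e)"
      unfolding c0_def using M_pos by (simp add: powr_mult)
    finally show ?thesis .
  qed
  thus ?thesis using c0 by blast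
qed

end



lemma lower_sum:
  fixes K :: "real \<Rightarrow> real" and e :: real
  assumes e: "0 < e"
    and Kmono: "\<And>s t. 0 < s \<Longrightarrow> s \<le> t \<Longrightarrow> K s \<le> K t"
    and Knn: "\<And>t. 0 < t \<Longrightarrow> 0 \<le> K t"
  shows "(\<Sum>n<N. ennreal (2 powr (-e-1) * (((1/2)^n) powr (-e) * K ((1/2)^n))))
     \<le> (\<integral>\<^sup>+ t. indicator {0<..} t * ennreal (t powr (- e) * K t / t) \<partial>lborel)"
proof -
  define tn :: "nat \<Rightarrow> real" where "tn n = (1/2)^n" for n
  have tn_pos: "tn n > 0" for n unfolding tn_def by simp
  define c where "c n = (2 * tn n) powr (-e-1) * K (tn n)" for n
  define I where "I n = {tn n..<2 * tn n}" for n
  have c_nn: "c n \<ge> 0" for n unfolding c_def using Knn[OF tn_pos] by simp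
  have disj: "n = m" if "t \<in> I n" "t \<in> I m" for t n m
  proof (rule ccontr)
    have key: False if "a < b" "t \<in> I a" "t \<in> I b" for a b
    proof -
      have "tn b \<le> tn (Suc a)" unfolding tn_def using \<open>a < b\<close>
        by (intro power_decreasing) auto
      also have "\<dots> = tn a / 2" unfolding tn_def by simp
      finally show False using that unfolding I_def by auto
    qed
    assume "n \<noteq> m"
    thus False using key[of n m] key[of m n] that by (cases "n < m") auto
  qed
  have pw: "(\<Sum>n<N. ennreal (c n) * indicator (I n) t)
      \<le> indicator {0<..} t * ennreal (t powr (- e) * K t / t)" for t
  proof (cases "\<exists>m<N. t \<in> I m")
    case False
    hence "(\<Sum>n<N. ennreal (c n) * indicator (I n) t) = 0" by (intro sum.neutral) auto
    thus ?thesis by simp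
  next
    case True
    then obtain m where m: "m < N" "t \<in> I m" by blast
    have "(\<Sum>n<N. ennreal (c n) * indicator (I n) t)
        = ennreal (c m) * indicator (I m) t + (\<Sum>n\<in>{..<N} - {m}. ennreal (c n) * indicator (I n) t)"
      using m by (intro sum.remove) auto
    also have "(\<Sum>n\<in>{..<N} - {m}. ennreal (c n) * indicator (I n) t) = 0"
      using disj m by (intro sum.neutral) (auto simp: indicator_def)
    finally have eq: "(\<Sum>n<N. ennreal (c n) * indicator (I n) t) = ennreal (c m)"
      using m by simp
    have t: "tn m \<le> t" "t < 2 * tn m" using m unfolding I_def by auto
    have tpos: "t > 0" using t tn_pos[of m] by linarith
    have "c m \<le> t powr (-e-1) * K t"
      unfolding c_def
      using t tn_pos[of m] e Kmono[OF tn_pos t(1)] Knn[OF tn_pos, of m] tpos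
      by (intro mult_mono powr_mono2') auto
    also have "t powr (-e-1) * K t = t powr (- e) * K t / t"
      using tpos by (simp add: powr_diff)
    finally show ?thesis using eq tpos by (simp add: ennreal_leI)
  qed
  have "(\<Sum>n<N. ennreal (2 powr (-e-1) * (((1/2)^n) powr (-e) * K ((1/2)^n))))
      = (\<Sum>n<N. ennreal (c n) * emeasure lborel (I n))"
  proof (intro sum.cong refl)
    fix n
    have "emeasure lborel (I n) = ennreal (tn n)" unfolding I_def
      using tn_pos[of n] by simp
    moreover have "c n * tn n = 2 powr (-e-1) * (((1/2)^n) powr (-e) * K ((1/2)^n))"
      unfolding c_def tn_def[symmetric]
      using tn_pos[of n] by (simp add: powr_mult powr_diff)
    ultimately show "ennreal (2 powr (-e-1) * (((1/2)^n) powr (-e) * K ((1/2)^n)))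
        = ennreal (c n) * emeasure lborel (I n)"
      using c_nn[of n] tn_pos[of n] by (simp add: ennreal_mult'[symmetric] ennreal_mult)
  qed
  also have "\<dots> = (\<Sum>n<N. \<integral>\<^sup>+ t. ennreal (c n) * indicator (I n) t \<partial>lborel)"
    by (intro sum.cong refl nn_integral_cmult_indicator[symmetric]) (simp add: I_def)
  also have "\<dots> = (\<integral>\<^sup>+ t. (\<Sum>n<N. ennreal (c n) * indicator (I n) t) \<partial>lborel)"
    by (rule nn_integral_sum[symmetric]) (simp add: I_def)
  also have "\<dots> \<le> (\<integral>\<^sup>+ t. indicator {0<..} t * ennreal (t powr (- e) * K t / t) \<partial>lborel)"
    by (intro nn_integral_mono pw)
  finally show ?thesis .
qed

context setting begin

lemma nL_sum:
  assumes "finite I" "\<forall>i\<in>I. v i \<in> XL"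
  shows "sum v I \<in> XL \<and> nL (sum v I) \<le> (\<Sum>i\<in>I. nL (v i))"
  using assms
proof (induction I rule: finite_induct)
  case empty thus ?case using XL_subspace subspace_0 nL_0 by simp
next
  case (insert a F)
  hence IH: "sum v F \<in> XL" "nL (sum v F) \<le> (\<Sum>i\<in>F. nL (v i))" and va: "v a \<in> XL" by auto
  have "sum v (insert a F) = v a + sum v F" using insert by simp
  moreover have "v a + sum v F \<in> XL" using IH va XL_subspace by (simp add: subspace_add)
  moreover have "nL (v a + sum v F) \<le> nL (v a) + (\<Sum>i\<in>F. nL (v i))"
    using nL_tri[OF va IH(1)] IH(2) by linarith
  ultimately show ?case using insert by simp
qed

end



context setting begin

lemma L_to_i_x:
  assumes c0: "c0 \<ge> 0"
    and L: "\<forall>u\<in>XS. nL u \<le> c0 * qS u powr e * norm (A u) powr (1-e)"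
    and Cq: "Cq \<ge> 1" "\<forall>x\<in>XS. \<forall>y\<in>XS. qS (x + y) \<le> Cq * (qS x + qS y)"
    and Cs: "Cs \<ge> 0" "\<forall>x\<in>XS. nL x \<le> Cs * qS x"
    and CL: "CL \<ge> 0" "\<forall>x\<in>XL. norm x \<le> CL * nL x"
    and sp: "x \<in> interp_space XS qS e" and xne: "x \<noteq> 0"
  shows "x \<in> XL \<and> nL x \<le> ((c0 * (6*Cq) powr e * (4*M) powr (1-e)) + 2 * Cs) * 2 powr (e+1)
            * interp_norm XS qS e x"
proof -
  define D where "D = c0 * (6*Cq) powr e * (4*M) powr (1-e)"
  have D: "D \<ge> 0" unfolding D_def using c0 by simp
  define J where "J = interp_norm XS qS e x"
  have Ifin: "interp_integral XS qS e x = ennreal J"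
    using sp unfolding J_def interp_norm_def interp_space_def
    by (simp add: ennreal_enn2real less_top[symmetric])
  have J: "J \<ge> 0" unfolding J_def interp_norm_def by simp
  define tn :: "nat \<Rightarrow> real" where "tn n = (1/2)^n" for n
  have tn_pos: "tn n > 0" for n unfolding tn_def by simp
  have tn_le1: "tn n \<le> 1" for n unfolding tn_def by (simp add: power_le_one)
  have tn_Suc: "tn (Suc n) = tn n / 2" for n unfolding tn_def by simp
  define Kn where "Kn n = Kfun XS qS x (tn n)" for n
  have Kn_pos: "Kn n > 0" for n unfolding Kn_def using K_pos[OF xne tn_pos] .
  have Kn_Suc: "Kn (Suc n) \<le> Kn n" for n unfolding Kn_def
    using tn_pos[of "Suc n"] tn_Suc[of n] tn_pos[of n] by (intro K_mono) auto
  have "\<forall>n. \<exists>z. z \<in> XS \<and> norm (x - z) + tn n * qS z < 2 * Kn n"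
  proof
    fix n
    obtain z where "z \<in> XS" "norm (x - z) + tn n * qS z < Kn n + Kn n"
      using K_approx[of "tn n" "Kn n" x] tn_pos[of n] Kn_pos[of n] unfolding Kn_def by auto
    thus "\<exists>z. z \<in> XS \<and> norm (x - z) + tn n * qS z < 2 * Kn n" by auto
  qed
  then obtain z where z: "\<And>n. z n \<in> XS" "\<And>n. norm (x - z n) + tn n * qS (z n) < 2 * Kn n"
    by metis
  have zL: "z n \<in> XL" for n using z XS_XL_sub by blast
  have nz: "norm (x - z n) \<le> 2 * Kn n" for n
    using z(2)[of n] qS_nonneg[OF z(1)] tn_pos[of n] by (smt (verit) mult_nonneg_nonneg)
  have qz: "qS (z n) \<le> 2 * Kn n / tn n" for n
  proof -
    have "tn n * qS (z n) \<le> 2 * Kn n" using z(2)[of n] norm_ge_zero[of "x - z n"] by linarith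
    thus ?thesis using tn_pos[of n] by (simp add: le_divide_eq mult.commute)
  qed
  define S where "S n = tn n powr (-e) * Kn n" for n
  have S_nn: "S n \<ge> 0" for n unfolding S_def using Kn_pos[of n] by simp
  have low: "(\<Sum>n<N. S n) \<le> 2 powr (e+1) * J" for N
  proof -
    have Kmono: "\<And>s t. 0 < s \<Longrightarrow> s \<le> t \<Longrightarrow> Kfun XS qS x s \<le> Kfun XS qS x t"
      by (rule K_mono) auto
    have Knn: "\<And>t. 0 < t \<Longrightarrow> 0 \<le> Kfun XS qS x t" by (rule K_nonneg) auto
    have "(\<Sum>n<N. ennreal (2 powr (-e-1) * S n)) \<le> interp_integral XS qS e x"
      unfolding interp_integral_def S_def Kn_def tn_def
      by (rule lower_sum[OF e(1) Kmono Knn])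
    also have "(\<Sum>n<N. ennreal (2 powr (-e-1) * S n)) = ennreal (\<Sum>n<N. 2 powr (-e-1) * S n)"
      using S_nn by (intro sum_ennreal) simp
    finally have "(\<Sum>n<N. 2 powr (-e-1) * S n) \<le> J" using Ifin J by simp
    hence "2 powr (-e-1) * (\<Sum>n<N. S n) \<le> J" by (simp add: sum_distrib_left)
    hence "2 powr (e+1) * (2 powr (-e-1) * (\<Sum>n<N. S n)) \<le> 2 powr (e+1) * J"
      by (intro mult_left_mono) auto
    moreover have "2 powr (e+1) * (2 powr (-e-1) * (\<Sum>n<N. S n)) = (\<Sum>n<N. S n)"
      by (simp add: powr_add[symmetric] mult.assoc[symmetric])
    ultimately show ?thesis by simp
  qed
  have S_sum: "summable S"
    by (rule summableI_nonneg_bounded[of S "2 powr (e+1) * J"]) (use S_nn low in auto)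
  have S0: "S \<longlonglongrightarrow> 0" by (rule summable_LIMSEQ_zero[OF S_sum])
  have Kn_le_S: "Kn n \<le> S n" for n
  proof -
    have "Kn n = tn n powr e * S n" unfolding S_def
      using tn_pos[of n] by (simp add: powr_minus field_simps)
    also have "\<dots> \<le> 1 * S n" using tn_pos[of n] tn_le1[of n] e S_nn[of n]
      by (intro mult_right_mono) (use powr_mono2[of e "tn n" 1] in auto)
    finally show ?thesis by simp
  qed
  have Kn0: "Kn \<longlonglongrightarrow> 0"
    by (rule Lim_null_comparison[OF _ S0]) (use Kn_pos Kn_le_S in \<open>auto intro!: always_eventually simp: less_imp_le\<close>)
  define u where "u n = z n - z (Suc n)" for n
  have uS: "u n \<in> XS" for n unfolding u_def using z(1) XS_subspace by (simp add: subspace_diff)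
  have uL: "u n \<in> XL" for n using uS XS_XL_sub by blast
  have qu: "qS (u n) \<le> 6 * Cq * Kn n / tn n" for n
  proof -
    have m: "- z (Suc n) \<in> XS" using z(1) XS_subspace by (simp add: subspace_neg)
    have "qS (u n) = qS (z n + - z (Suc n))" unfolding u_def by simp
    also have "\<dots> \<le> Cq * (qS (z n) + qS (- z (Suc n)))" using Cq z(1) m by blast
    also have "qS (- z (Suc n)) = qS (z (Suc n))" using qS_neg z(1) by blast
    also have "qS (z (Suc n)) \<le> 4 * Kn n / tn n"
    proof -
      have "qS (z (Suc n)) \<le> 2 * Kn (Suc n) / tn (Suc n)" by (rule qz)
      also have "\<dots> = 4 * Kn (Suc n) / tn n" unfolding tn_Suc by simp
      also have "\<dots> \<le> 4 * Kn n / tn n" using Kn_Suc[of n] tn_pos[of n]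
        by (intro divide_right_mono) auto
      finally show ?thesis .
    qed
    hence "Cq * (qS (z n) + qS (z (Suc n))) \<le> Cq * (2 * Kn n / tn n + 4 * Kn n / tn n)"
      using qz[of n] Cq by (intro mult_left_mono) auto
    finally show ?thesis by (simp add: field_simps)
  qed
  have au: "norm (A (u n)) \<le> 4 * M * Kn n" for n
  proof -
    have "norm (A (u n)) \<le> M * norm (u n)" using A_bounds by blast
    also have "norm (u n) \<le> norm (x - z (Suc n)) + norm (x - z n)"
      unfolding u_def using norm_triangle_ineq4[of "x - z (Suc n)" "x - z n"]
      by (simp add: algebra_simps)
    also have "\<dots> \<le> 4 * Kn n" using nz[of n] nz[of "Suc n"] Kn_Suc[of n] by linarith
    finally show ?thesis using M_pos by (simp add: mult_left_mono)
  qed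
  have nu: "nL (u n) \<le> D * S n" for n
  proof -
    have q0: "0 \<le> qS (u n)" by (rule qS_nonneg[OF uS])
    have "nL (u n) \<le> c0 * qS (u n) powr e * norm (A (u n)) powr (1-e)" using L uS by blast
    also have "\<dots> \<le> c0 * (6 * Cq * Kn n / tn n) powr e * (4 * M * Kn n) powr (1-e)"
      using c0 qu[of n] au[of n] e q0
      by (intro mult_mono mult_left_mono powr_mono2) auto
    also have "\<dots> = c0 * ((6 * Cq * Kn n / tn n) powr e * (4 * M * Kn n) powr (1-e))"
      by (simp add: mult.assoc)
    also have "(6 * Cq * Kn n / tn n) powr e * (4 * M * Kn n) powr (1-e)
        = (6 * Cq) powr e * (4 * M) powr (1-e) * (tn n powr (-e) * (Kn n powr e * Kn n powr (1-e)))"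
      using Cq tn_pos[of n] Kn_pos[of n] M_pos
      by (simp add: powr_mult powr_divide powr_minus divide_inverse inverse_powr)
    also have "Kn n powr e * Kn n powr (1-e) = Kn n"
      using Kn_pos[of n] by (simp add: powr_add[symmetric])
    finally show ?thesis unfolding D_def S_def by (simp add: mult.assoc)
  qed
  have nu_sum: "summable (\<lambda>n. nL (u n))"
    by (rule summable_comparison_test[of _ "\<lambda>n. D * S n"])
       (use nL_nonneg[OF uL] nu S_sum in \<open>auto intro!: summable_mult\<close>)
  have tele: "z m - z k = (\<Sum>i\<in>{m..<k}. u i)" if "m \<le> k" for m k
  proof -
    have "(\<Sum>i\<in>{m..<k}. u i) = - (\<Sum>i\<in>{m..<k}. z (Suc i) - z i)"
      unfolding u_def by (simp add: sum_negf[symmetric])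
    also have "\<dots> = z m - z k" using sum_Suc_diff'[OF that, of z] by simp
    finally show ?thesis by simp
  qed
  have dz: "nL (z m - z k) \<le> (\<Sum>i\<in>{m..<k}. nL (u i))" if "m \<le> k" for m k
    using tele[OF that] nL_sum[of "{m..<k}" u] uL by simp
  have cauchy: "\<forall>\<epsilon>>0. \<exists>N. \<forall>m\<ge>N. \<forall>k\<ge>N. nL (z m - z k) < \<epsilon>"
  proof (intro allI impI)
    fix \<epsilon> :: real assume "\<epsilon> > 0"
    then obtain N where N: "\<forall>m\<ge>N. \<forall>n. norm (\<Sum>i\<in>{m..<n}. nL (u i)) < \<epsilon>"
      using nu_sum unfolding summable_Cauchy by blast
    have "nL (z m - z k) < \<epsilon>" if "m \<ge> N" "k \<ge> N" for m k
    proof (cases "m \<le> k")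
      case True
      have "nL (z m - z k) \<le> (\<Sum>i\<in>{m..<k}. nL (u i))" by (rule dz[OF True])
      also have "\<dots> \<le> norm (\<Sum>i\<in>{m..<k}. nL (u i))" by simp
      also have "\<dots> < \<epsilon>" using N that by blast
      finally show ?thesis .
    next
      case False
      have "nL (z m - z k) = nL (z k - z m)" using nL_commute zL by blast
      also have "\<dots> \<le> (\<Sum>i\<in>{k..<m}. nL (u i))" using dz False by simp
      also have "\<dots> \<le> norm (\<Sum>i\<in>{k..<m}. nL (u i))" by simp
      also have "\<dots> < \<epsilon>" using N that by blast
      finally show ?thesis .
    qed
    thus "\<exists>N. \<forall>m\<ge>N. \<forall>k\<ge>N. nL (z m - z k) < \<epsilon>" by blast
  qed
  obtain y where y: "y \<in> XL" "(\<lambda>k. nL (z k - y)) \<longlonglongrightarrow> 0"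
    using XL_complete cauchy zL unfolding complete_wrt_def by blast
  have zx: "z \<longlonglongrightarrow> x"
  proof -
    have "(\<lambda>k. z k - x) \<longlonglongrightarrow> 0"
    proof (rule Lim_null_comparison[of _ "\<lambda>k. 2 * Kn k"])
      show "\<forall>\<^sub>F k in sequentially. norm (z k - x) \<le> 2 * Kn k"
        using nz by (auto simp: norm_minus_commute intro!: always_eventually)
      show "(\<lambda>k. 2 * Kn k) \<longlonglongrightarrow> 0" using tendsto_mult_right_zero[OF Kn0, of 2] by simp
    qed
    thus ?thesis by (rule LIM_zero_cancel)
  qed
  have zy: "z \<longlonglongrightarrow> y"
  proof -
    have "(\<lambda>k. z k - y) \<longlonglongrightarrow> 0"
    proof (rule Lim_null_comparison[of _ "\<lambda>k. CL * nL (z k - y)"])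
      show "\<forall>\<^sub>F k in sequentially. norm (z k - y) \<le> CL * nL (z k - y)"
        using CL zL y XL_subspace by (auto simp: subspace_diff intro!: always_eventually)
      show "(\<lambda>k. CL * nL (z k - y)) \<longlonglongrightarrow> 0" using tendsto_mult_right_zero[OF y(2), of CL] by simp
    qed
    thus ?thesis by (rule LIM_zero_cancel)
  qed
  have xy: "x = y" using LIMSEQ_unique[OF zx zy] .
  have xL: "x \<in> XL" using xy y by simp
  define Cf where "Cf = (D + 2 * Cs) * 2 powr (e+1)"
  have bnd: "nL x \<le> nL (x - z k) + Cf * J" for k
  proof -
    have xz: "x - z k \<in> XL" using xL zL XL_subspace by (simp add: subspace_diff)
    have zz: "z k - z 0 \<in> XL" using zL XL_subspace by (simp add: subspace_diff)
    have "x = (x - z k) + ((z k - z 0) + z 0)" by simp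
    hence "nL x = nL ((x - z k) + ((z k - z 0) + z 0))" by simp
    also have "\<dots> \<le> nL (x - z k) + nL ((z k - z 0) + z 0)"
      using xz zz zL XL_subspace by (intro nL_tri) (auto simp: subspace_add)
    also have "nL ((z k - z 0) + z 0) \<le> nL (z k - z 0) + nL (z 0)" using zz zL by (intro nL_tri)
    also have "nL (z k - z 0) \<le> D * 2 powr (e+1) * J"
    proof -
      have "nL (z k - z 0) = nL (z 0 - z k)" using nL_commute zL by blast
      also have "\<dots> \<le> (\<Sum>i\<in>{0..<k}. nL (u i))" by (rule dz) simp
      also have "\<dots> \<le> (\<Sum>i\<in>{0..<k}. D * S i)" by (intro sum_mono nu)
      also have "\<dots> = D * (\<Sum>i<k. S i)" by (simp add: sum_distrib_left atLeast0LessThan)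
      also have "\<dots> \<le> D * (2 powr (e+1) * J)" using low D by (intro mult_left_mono) auto
      finally show ?thesis by simp
    qed
    also have "nL (z 0) \<le> 2 * Cs * 2 powr (e+1) * J"
    proof -
      have "nL (z 0) \<le> Cs * qS (z 0)" using Cs z(1) by blast
      also have "\<dots> \<le> Cs * (2 * Kn 0 / tn 0)" using Cs qz by (intro mult_left_mono) auto
      also have "2 * Kn 0 / tn 0 = 2 * S 0" unfolding S_def tn_def by simp
      also have "S 0 \<le> 2 powr (e+1) * J" using low[of 1] by simp
      finally show ?thesis using Cs by (simp add: mult_left_mono)
    qed
    finally show ?thesis unfolding Cf_def by (simp add: algebra_simps)
  qed
  have lim: "(\<lambda>k. nL (x - z k) + Cf * J) \<longlonglongrightarrow> 0 + Cf * J"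
  proof (intro tendsto_add tendsto_const)
    have "(\<lambda>k. nL (z k - y)) = (\<lambda>k. nL (x - z k))"
      using xy nL_commute zL y by (auto intro!: ext)
    thus "(\<lambda>k. nL (x - z k)) \<longlonglongrightarrow> 0" using y(2) by simp
  qed
  have "nL x \<le> 0 + Cf * J"
    by (rule LIMSEQ_le_const[OF lim]) (use bnd in blast)
  thus ?thesis using xL unfolding Cf_def D_def J_def by simp
qed

end



theorem proposition4p12:
  fixes A :: "'a::banach \<Rightarrow> 'b::{real_inner, complete_space}"
    and X XS XL :: "'a set"
    and nX qS nL :: "'a \<Rightarrow> real"
    and M e :: real
  assumes X_banach: "banach_subspace X nX"
    and X_emb: "cont_embedding X nX UNIV norm"
    and X_dense: "closure X = UNIV"
    and A_lin: "bounded_linear A"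
    and M_ge: "M \<ge> 1"
    and A_bounds: "\<forall>x. norm x / M \<le> norm (A x) \<and> norm (A x) \<le> M * norm x"
    and XS_qb: "quasi_banach_subspace XS qS"
    and XS_sub: "XS \<subseteq> X"
    and XL_banach: "banach_subspace XL nL"
    and XS_XL: "cont_embedding XS qS XL nL"
    and XL_XA: "cont_embedding XL nL UNIV norm"
    and e: "0 < e" "e < 1"
  shows "cont_embedding (interp_space XS qS e) (interp_norm XS qS e) XL nL
     \<longleftrightarrow> (\<exists>c>0. \<forall>\<delta>>0. \<forall>\<rho>>0.
            modulus A XL nL \<delta> (Sball XS qS \<rho>) \<le> ereal (c * \<rho> powr e * \<delta> powr (1 - e)))"
proof -
  interpret S: setting A XS XL qS nL M e
    by (rule setting.intro[OF A_lin M_ge A_bounds XS_qb XL_banach XS_XL XL_XA e])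
  show ?thesis
  proof
    assume emb: "cont_embedding (interp_space XS qS e) (interp_norm XS qS e) XL nL"
    obtain c0 where "c0 \<ge> 0" "\<forall>u\<in>XS. nL u \<le> c0 * qS u powr e * norm (A u) powr (1-e)"
      using S.i_to_L[OF emb] by blast
    thus "\<exists>c>0. \<forall>\<delta>>0. \<forall>\<rho>>0.
            modulus A XL nL \<delta> (Sball XS qS \<rho>) \<le> ereal (c * \<rho> powr e * \<delta> powr (1 - e))"
      by (rule S.L_to_ii)
  next
    assume "\<exists>c>0. \<forall>\<delta>>0. \<forall>\<rho>>0.
            modulus A XL nL \<delta> (Sball XS qS \<rho>) \<le> ereal (c * \<rho> powr e * \<delta> powr (1 - e))"
    then obtain c where c: "c > 0" and H: "\<forall>\<delta>>0. \<forall>\<rho>>0.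
            modulus A XL nL \<delta> (Sball XS qS \<rho>) \<le> ereal (c * \<rho> powr e * \<delta> powr (1 - e))"
      by blast
    have L: "\<forall>u\<in>XS. nL u \<le> c * qS u powr e * norm (A u) powr (1-e)"
      using S.ii_to_L[OF c H] by blast
    obtain Cq where Cq: "Cq \<ge> 1" "\<forall>x\<in>XS. \<forall>y\<in>XS. qS (x + y) \<le> Cq * (qS x + qS y)"
      using S.qS_quasi by blast
    obtain Cs where Cs: "Cs \<ge> 0" "\<forall>x\<in>XS. nL x \<le> Cs * qS x" using S.Cs_ex by blast
    obtain CL where CL: "CL \<ge> 0" "\<forall>x\<in>XL. norm x \<le> CL * nL x" using S.CL_ex by blast
    define C where "C = ((c * (6*Cq) powr e * (4*M) powr (1-e)) + 2 * Cs) * 2 powr (e+1)"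
    have C: "C \<ge> 0" unfolding C_def using c Cs by simp
    have main: "x \<in> XL \<and> nL x \<le> C * interp_norm XS qS e x"
      if x: "x \<in> interp_space XS qS e" for x
    proof (cases "x = 0")
      case True
      have "0 \<le> C * interp_norm XS qS e x" using C by (simp add: interp_norm_def)
      thus ?thesis using True S.nL_0 S.XL_subspace subspace_0 by auto
    next
      case False
      show ?thesis unfolding C_def
        by (rule S.L_to_i_x[OF less_imp_le[OF c] L Cq Cs CL x False])
    qed
    show "cont_embedding (interp_space XS qS e) (interp_norm XS qS e) XL nL"
      unfolding cont_embedding_def using main by blast
  qed
qed


end
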